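(* Let $\Omega\subset\mathbb{R}^d$ be a compact set, $\mu$ a positive finite measure on $\Omega$ with $\mu(\Omega)>0$, and $n\ge 0$ an integer. Let $S(f)=\sum_{i=1}^M w_i f(\mathbf{x}_i)$ be a cubature rule with nodes $\mathbf{x}_i\in\Omega$ and positive weights $w_i>0$. Let $\{\phi_j\}_{j=1}^{d_n}$ be a $\mu$-orthonormal basis of $\mathbb{P}_n$ (polynomials of total degree at most $n$, $d_n=\dim\mathbb{P}_n$), and let $G=(S(\phi_i\phi_j))_{1\le i,j\le d_n}$. Suppose there are constants $A>0$, $B>0$ such that $$A\,\|p\|_{L^2}^2\le S(p^2)\le B\,\|p\|_{L^2}^2\quad\text{for all }p\in\mathbb{P}_n,$$ where $\|p\|_{L^2}^2=\int_\Omega p^2\,d\mu$, and that $\eta:=\max\{|A-1|,|B-1|\}<1$. For $f\in C(\Omega)$ define the weighted least-squares polynomial $$\mathcal{G}_nf=\sum_{j=1}^{d_n}c_j\phi_j,\qquad (c_1,\dots,c_{d_n})^T=G^{-1}\bigl(S(f\phi_1),\dots,S(f\phi_{d_n})\bigr)^T.$$ Then for every $f\in C(\Omega)$, $$\|f-\mathcal{G}_nf\|_{L^2}\le\Bigl(1+\sqrt{\mathrm{cond}_2(G)}\Bigr)\sqrt{\mu(\Omega)}\,E_n(f)\le\Bigl(1+\sqrt{\tfrac{1+\eta}{1-\eta}}\Bigr)\sqrt{\mu(\Omega)}\,E_n(f),$$ and, if in addition the rule is exact on constants (i.e. $\sum_{i=1}^M w_i=\mu(\Omega)$), $$\|f-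\mathcal{G}_nf\|_{L^2}\le\Bigl(1+\tfrac{1}{\sqrt{A}}\Bigr)\sqrt{\mu(\Omega)}\,E_n(f)\le\Bigl(1+\tfrac{1}{\sqrt{1-\eta}}\Bigr)\sqrt{\mu(\Omega)}\,E_n(f).$$
   Context: $E_n(f)=\min_{p\in\mathbb{P}_n}\|f-p\|_{\infty}$ is the error of best uniform polynomial approximation of degree $n$ on $\Omega$. $\mathrm{cond}_2(G)=\lambda_{\max}(G)/\lambda_{\min}(G)$ is the spectral condition number of the symmetric positive definite matrix $G$. The $L^2$ norm is taken with respect to $\mu$. *)

theory Defs
  imports "HOL-Analysis.Analysis"
begin

definition monomial :: "('d::finite \<Rightarrow> nat) \<Rightarrow> real^'d \<Rightarrow> real" where
  "monomial \<alpha> x = (\<Prod>i\<in>UNIV. (x $ i) ^ (\<alpha> i))"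

definition polys :: "nat \<Rightarrow> (real^'d::finite \<Rightarrow> real) set" where
  "polys n = {p. \<exists>c :: ('d \<Rightarrow> nat) \<Rightarrow> real.
                  p = (\<lambda>x. \<Sum>\<alpha>\<in>{\<alpha>. sum \<alpha> UNIV \<le> n}. c \<alpha> * monomial \<alpha> x)}"

definition cub :: "(nat \<Rightarrow> real) \<Rightarrow> (nat \<Rightarrow> 'a) \<Rightarrow> nat \<Rightarrow> ('a \<Rightarrow> real) \<Rightarrow> real" where
  "cub w xs M g = (\<Sum>i<M. w i * g (xs i))"

definition L2norm :: "'a measure \<Rightarrow> ('a \<Rightarrow> real) \<Rightarrow> real" where
  "L2norm \<mu> g = sqrt (\<integral>x. (g x)\<^sup>2 \<partial>\<mu>)"

definition best_approx_err :: "nat \<Rightarrow> (real^'d::finite) set \<Rightarrow> (real^'d \<Rightarrow> real) \<Rightarrow> real" where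
  "best_approx_err n \<Omega> f = (INF p\<in>polys n. (SUP x\<in>\<Omega>. \<bar>f x - p x\<bar>))"

definition is_eigenvalue :: "(nat \<Rightarrow> nat \<Rightarrow> real) \<Rightarrow> nat \<Rightarrow> real \<Rightarrow> bool" where
  "is_eigenvalue G N ev \<longleftrightarrow> (\<exists>v. (\<exists>i<N. v i \<noteq> 0) \<and> (\<forall>i<N. (\<Sum>j<N. G i j * v j) = ev * v i))"

definition cond2 :: "(nat \<Rightarrow> nat \<Rightarrow> real) \<Rightarrow> nat \<Rightarrow> real" where
  "cond2 G N = Max {ev. is_eigenvalue G N ev} / Min {ev. is_eigenvalue G N ev}"

definition gram :: "(nat \<Rightarrow> real) \<Rightarrow> (nat \<Rightarrow> 'a) \<Rightarrow> nat \<Rightarrow> (nat \<Rightarrow> 'a \<Rightarrow> real) \<Rightarrow> nat \<Rightarrow> nat \<Rightarrow> real" where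
  "gram w xs M \<phi> i j = cub w xs M (\<lambda>x. \<phi> i x * \<phi> j x)"

definition lsq_coeffs :: "(nat \<Rightarrow> real) \<Rightarrow> (nat \<Rightarrow> 'a) \<Rightarrow> nat \<Rightarrow> (nat \<Rightarrow> 'a \<Rightarrow> real) \<Rightarrow> nat
    \<Rightarrow> ('a \<Rightarrow> real) \<Rightarrow> nat \<Rightarrow> real" where
  "lsq_coeffs w xs M \<phi> N f = (THE c. (\<forall>i<N. (\<Sum>j<N. gram w xs M \<phi> i j * c j) = cub w xs M (\<lambda>x. f x * \<phi> i x))
                                  \<and> (\<forall>j\<ge>N. c j = 0))"

definition lsq_approx :: "(nat \<Rightarrow> real) \<Rightarrow> (nat \<Rightarrow> 'a) \<Rightarrow> nat \<Rightarrow> (nat \<Rightarrow> 'a \<Rightarrow> real) \<Rightarrow> nat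
    \<Rightarrow> ('a \<Rightarrow> real) \<Rightarrow> 'a \<Rightarrow> real" where
  "lsq_approx w xs M \<phi> N f = (\<lambda>x. \<Sum>j<N. lsq_coeffs w xs M \<phi> N f j * \<phi> j x)"

end

theory Submission
  imports Defs "Jordan_Normal_Form.Spectral_Radius"
begin


lemma lin_quad_nonneg_zero:
  fixes a b :: real
  assumes "\<forall>t. a * t + b * t\<^sup>2 \<ge> 0"
  shows "a = 0"
proof (rule ccontr)
  assume a: "a \<noteq> 0"
  define t where "t = - a / (2 * (\<bar>b\<bar> + 1))"
  have pos: "\<bar>b\<bar> + 1 > 0" by simp
  have "a * t = - a\<^sup>2 / (2 * (\<bar>b\<bar> + 1))" unfolding t_def by (simp add: power2_eq_square)
  moreover have "b * t\<^sup>2 \<le> a\<^sup>2 / (4 * (\<bar>b\<bar> + 1))"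
  proof -
    have "b * t\<^sup>2 \<le> \<bar>b\<bar> * t\<^sup>2" by (intro mult_right_mono) auto
    also have "\<dots> = \<bar>b\<bar> * a\<^sup>2 / (4 * (\<bar>b\<bar> + 1)^2)" unfolding t_def
      by (simp add: power_divide power_mult_distrib power2_eq_square algebra_simps)
    also have "\<dots> \<le> (\<bar>b\<bar> + 1) * a\<^sup>2 / (4 * (\<bar>b\<bar> + 1)^2)"
      by (intro divide_right_mono mult_right_mono) auto
    also have "\<dots> = a\<^sup>2 / (4 * (\<bar>b\<bar> + 1))" using pos by (simp add: power2_eq_square)
    finally show ?thesis .
  qed
  ultimately have "a * t + b * t\<^sup>2 \<le> - a\<^sup>2 / (2 * (\<bar>b\<bar> + 1)) + a\<^sup>2 / (4 * (\<bar>b\<bar> + 1))" by linarith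
  also have "\<dots> = - a\<^sup>2 / (4 * (\<bar>b\<bar> + 1))"
  proof -
    have "\<And>k x::real. k > 0 \<Longrightarrow> - x / (2 * k) + x / (4 * k) = - x / (4 * k)"
      by (simp add: field_simps)
    then show ?thesis using pos by blast
  qed
  also have "\<dots> < 0" using a pos by (simp add: divide_pos_pos)
  finally show False using assms by (metis not_le)
qed

definition qf :: "(nat \<Rightarrow> nat \<Rightarrow> real) \<Rightarrow> nat \<Rightarrow> (nat \<Rightarrow> real) \<Rightarrow> real" where
  "qf H N c = (\<Sum>i<N. c i * (\<Sum>j<N. H i j * c j))"

definition nrm :: "nat \<Rightarrow> (nat \<Rightarrow> real) \<Rightarrow> real" where
  "nrm N c = (\<Sum>i<N. (c i)\<^sup>2)"

lemma compact_box:
  "compact (Pi UNIV (\<lambda>i::nat. if i < N then {-1..1::real} else {0}))"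
proof -
  have "compactin (product_topology (\<lambda>i. euclidean) UNIV)
          (PiE UNIV (\<lambda>i::nat. if i < N then {-1..1::real} else {0}))"
    by (subst compactin_PiE) auto
  then show ?thesis by (simp add: euclidean_product_topology PiE_UNIV_domain)
qed

lemma qf_cont: "continuous_on UNIV (qf H N)"
  unfolding qf_def by (intro continuous_intros continuous_on_product_coordinates)

lemma nrm_cont: "continuous_on UNIV (nrm N)"
  unfolding nrm_def by (intro continuous_intros continuous_on_product_coordinates)

lemma qf_expand:
  "qf H N (\<lambda>i. x i + t * y i) = qf H N x + t * (\<Sum>i<N. x i * (\<Sum>j<N. H i j * y j))
     + t * (\<Sum>i<N. y i * (\<Sum>j<N. H i j * x j)) + t\<^sup>2 * qf H N y"
  unfolding qf_def by (simp add: algebra_simps sum.distrib sum_distrib_left power2_eq_square)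

lemma bil_sym:
  fixes H :: "nat \<Rightarrow> nat \<Rightarrow> real"
  assumes "\<forall>i<N. \<forall>j<N. H i j = H j i"
  shows "(\<Sum>i<N. x i * (\<Sum>j<N. H i j * y j)) = (\<Sum>i<N. y i * (\<Sum>j<N. H i j * x j))"
proof -
  have "(\<Sum>i<N. x i * (\<Sum>j<N. H i j * y j)) = (\<Sum>i<N. \<Sum>j<N. x i * H i j * y j)"
    unfolding sum_distrib_left by (simp add: mult.assoc)
  also have "\<dots> = (\<Sum>j<N. \<Sum>i<N. x i * H i j * y j)" by (rule sum.swap)
  also have "\<dots> = (\<Sum>j<N. y j * (\<Sum>i<N. H j i * x i))"
    using assms by (auto simp: sum_distrib_left intro!: sum.cong)
  finally show ?thesis .
qed

lemma nrm_expand: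
  "nrm N (\<lambda>i. x i + t * y i) = nrm N x + 2 * t * (\<Sum>i<N. y i * x i) + t\<^sup>2 * nrm N y"
  unfolding nrm_def by (simp add: algebra_simps sum.distrib sum_distrib_left power2_eq_square)

lemma nrm_zero:
  assumes "nrm N c = 0" "i < N" shows "c i = 0"
proof -
  have "\<forall>i\<in>{..<N}. (c i)\<^sup>2 = 0"
    using assms(1) unfolding nrm_def by (subst sum_nonneg_eq_0_iff[symmetric]) auto
  then show ?thesis using assms(2) by simp
qed

lemma nrm_nonneg: "nrm N c \<ge> 0" unfolding nrm_def by (intro sum_nonneg) auto

lemma qf_scale: "qf H N (\<lambda>i. t * c i) = t\<^sup>2 * qf H N c"
  unfolding qf_def by (simp add: sum_distrib_left algebra_simps power2_eq_square)

lemma nrm_scale: "nrm N (\<lambda>i. t * c i) = t\<^sup>2 * nrm N c"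
  unfolding nrm_def by (simp add: sum_distrib_left algebra_simps power2_eq_square)

lemma qf_cong: "(\<And>i. i < N \<Longrightarrow> c i = d i) \<Longrightarrow> qf H N c = qf H N d"
  unfolding qf_def by (intro sum.cong) auto

lemma nrm_cong: "(\<And>i. i < N \<Longrightarrow> c i = d i) \<Longrightarrow> nrm N c = nrm N d"
  unfolding nrm_def by (intro sum.cong) auto

lemma sym_min_eig:
  fixes H :: "nat \<Rightarrow> nat \<Rightarrow> real"
  assumes sym: "\<forall>i<N. \<forall>j<N. H i j = H j i" and N: "N > 0"
  shows "\<exists>m v. (\<exists>i<N. v i \<noteq> 0) \<and> (\<forall>i<N. (\<Sum>j<N. H i j * v j) = m * v i)
              \<and> (\<forall>c. qf H N c \<ge> m * nrm N c)"
proof -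
  define Bx where "Bx = Pi UNIV (\<lambda>i::nat. if i < N then {-1..1::real} else {0})"
  define Sph where "Sph = Bx \<inter> {v. nrm N v = 1}"
  have "closed {v. nrm N v = 1}"
    using nrm_cont[of N] by (intro closed_Collect_eq) auto
  then have cS: "compact Sph" unfolding Sph_def Bx_def using compact_box by (intro compact_Int_closed)
  define e0 where "e0 = (\<lambda>i::nat. if i = 0 then 1 else (0::real))"
  have "nrm N e0 = (\<Sum>i<N. (if i = 0 then 1 else 0::real))"
    unfolding nrm_def by (rule sum.cong) (auto simp: e0_def)
  also have "\<dots> = 1" using N by simp
  finally have "nrm N e0 = 1" .
  then have "e0 \<in> Sph" unfolding Sph_def Bx_def using N by (auto simp: e0_def)
  then have neS: "Sph \<noteq> {}" by auto
  obtain v where vS: "v \<in> Sph" and vmin: "\<forall>y\<in>Sph. qf H N v \<le> qf H N y"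
    using continuous_attains_inf[OF cS neS continuous_on_subset[OF qf_cont]] by blast
  define m where "m = qf H N v"
  have nv: "nrm N v = 1" using vS unfolding Sph_def by auto
  have bound: "qf H N c \<ge> m * nrm N c" for c
  proof (cases "nrm N c = 0")
    case True
    then have "qf H N c = qf H N (\<lambda>_. 0)" by (intro qf_cong) (auto intro: nrm_zero)
    then show ?thesis using True by (simp add: qf_def)
  next
    case False
    then have np: "nrm N c > 0" using nrm_nonneg[of N c] by auto
    define s where "s = sqrt (nrm N c)"
    have sp: "s > 0" using np unfolding s_def by simp
    define u where "u = (\<lambda>i. if i < N then (1/s) * c i else 0)"
    have nu: "nrm N u = (1/s)\<^sup>2 * nrm N c"
      by (subst nrm_scale[symmetric]) (intro nrm_cong, simp add: u_def)
    also have "\<dots> = 1" using np unfolding s_def by (simp add: power_divide)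
    finally have nu1: "nrm N u = 1" .
    have "u \<in> Bx" unfolding Bx_def
    proof (rule Pi_I)
      fix i
      show "u i \<in> (if i < N then {-1..1} else {0})"
      proof (cases "i < N")
        case True
        have "(u i)\<^sup>2 \<le> nrm N u" unfolding nrm_def using True
          by (intro member_le_sum) auto
        then have "(u i)\<^sup>2 \<le> 1" using nu1 by simp
        then have "\<bar>u i\<bar> \<le> 1" by (simp add: abs_square_le_1)
        then show ?thesis using True by (simp add: abs_le_iff)
      next
        case False then show ?thesis by (simp add: u_def)
      qed
    qed
    then have "u \<in> Sph" using nu1 unfolding Sph_def by auto
    then have "m \<le> qf H N u" using vmin unfolding m_def by auto
    also have "qf H N u = (1/s)\<^sup>2 * qf H N c"
      by (subst qf_scale[symmetric]) (intro qf_cong, simp add: u_def)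
    finally have "m \<le> qf H N c / s\<^sup>2" by (simp add: power_divide)
    moreover have "s\<^sup>2 = nrm N c" unfolding s_def using np by simp
    ultimately show ?thesis using np by (simp add: pos_le_divide_eq mult.commute)
  qed
  define r where "r = (\<lambda>i. (\<Sum>j<N. H i j * v j) - m * v i)"
  have key: "\<forall>t. (2 * nrm N r) * t + (qf H N r - m * nrm N r) * t\<^sup>2 \<ge> 0"
  proof
    fix t
    have "qf H N (\<lambda>i. v i + t * r i) \<ge> m * nrm N (\<lambda>i. v i + t * r i)" by (rule bound)
    then have "m + 2 * t * (\<Sum>i<N. r i * (\<Sum>j<N. H i j * v j)) + t\<^sup>2 * qf H N r
        \<ge> m * (1 + 2 * t * (\<Sum>i<N. r i * v i) + t\<^sup>2 * nrm N r)"
      unfolding qf_expand nrm_expand bil_sym[OF sym, of v r] nv m_def[symmetric] by simp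
    moreover have "(\<Sum>i<N. r i * (\<Sum>j<N. H i j * v j)) - m * (\<Sum>i<N. r i * v i) = nrm N r"
      unfolding nrm_def r_def by (simp add: sum_distrib_left sum_subtractf[symmetric] algebra_simps power2_eq_square)
    ultimately show "(2 * nrm N r) * t + (qf H N r - m * nrm N r) * t\<^sup>2 \<ge> 0"
      by (simp add: algebra_simps)
  qed
  have "nrm N r = 0" using lin_quad_nonneg_zero[OF key] by simp
  then have eig: "\<forall>i<N. (\<Sum>j<N. H i j * v j) = m * v i"
    using nrm_zero[of N r] unfolding r_def by auto
  have "\<exists>i<N. v i \<noteq> 0"
  proof (rule ccontr)
    assume "\<not> ?thesis"
    then have "nrm N v = 0" unfolding nrm_def by simp
    then show False using nv by simp
  qed
  then show ?thesis using eig bound by blast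
qed



lemma finite_multi: "finite {\<alpha>::('d::finite \<Rightarrow> nat). sum \<alpha> UNIV \<le> n}"
proof -
  have "{\<alpha>::('d \<Rightarrow> nat). sum \<alpha> UNIV \<le> n} \<subseteq> PiE UNIV (\<lambda>_. {..n})"
  proof
    fix \<alpha> :: "'d \<Rightarrow> nat" assume "\<alpha> \<in> {\<alpha>. sum \<alpha> UNIV \<le> n}"
    then have "\<alpha> i \<le> n" for i
      using member_le_sum[of i UNIV \<alpha>] by auto
    then show "\<alpha> \<in> PiE UNIV (\<lambda>_. {..n})" by auto
  qed
  then show ?thesis by (rule finite_subset) (intro finite_PiE, auto)
qed

lemma polys_cont: assumes "p \<in> polys n" shows "continuous_on UNIV p"
proof -
  obtain c where p: "p = (\<lambda>x. \<Sum>\<alpha>\<in>{\<alpha>. sum \<alpha> UNIV \<le> n}. c \<alpha> * monomial \<alpha> x)"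
    using assms unfolding polys_def by auto
  show ?thesis unfolding p monomial_def by (intro continuous_intros)
qed

lemma one_polys: "(\<lambda>x. 1) \<in> polys n"
proof -
  have "(\<lambda>x::real^'d. 1) = (\<lambda>x. \<Sum>\<alpha>\<in>{\<alpha>::'d\<Rightarrow>nat. sum \<alpha> UNIV \<le> n}. (if \<alpha> = (\<lambda>_. 0) then 1 else 0) * monomial \<alpha> x)"
  proof
    fix x :: "real^'d"
    let ?S = "{\<alpha>::'d\<Rightarrow>nat. sum \<alpha> UNIV \<le> n}"
    have "(\<Sum>\<alpha>\<in>?S. (if \<alpha> = (\<lambda>_. 0) then 1 else 0) * monomial \<alpha> x)
        = (\<Sum>\<alpha>\<in>?S. if \<alpha> = (\<lambda>_. 0) then monomial \<alpha> x else 0)"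
      by (rule sum.cong) simp_all
    also have "\<dots> = monomial (\<lambda>_. 0) x" 
      by (subst sum.delta[OF finite_multi]) simp
    also have "\<dots> = 1" by (simp add: monomial_def)
    finally show "1 = (\<Sum>\<alpha>\<in>?S. (if \<alpha> = (\<lambda>_. 0) then 1 else 0) * monomial \<alpha> x)" by simp
  qed
  then show ?thesis unfolding polys_def by (intro CollectI exI[of _ "\<lambda>\<alpha>. if \<alpha> = (\<lambda>_. 0) then 1 else 0"])
qed

lemma lincomb_polys:
  assumes "\<forall>j<N. \<phi> j \<in> polys n"
  shows "(\<lambda>x. \<Sum>j<N. c j * \<phi> j x) \<in> polys n"
proof -
  have "\<forall>j<N. \<exists>C. \<phi> j = (\<lambda>x. \<Sum>\<alpha>\<in>{\<alpha>. sum \<alpha> UNIV \<le> n}. C \<alpha> * monomial \<alpha> x)"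
    using assms unfolding polys_def by blast
  then obtain C where C: "\<forall>j<N. \<phi> j = (\<lambda>x. \<Sum>\<alpha>\<in>{\<alpha>. sum \<alpha> UNIV \<le> n}. C j \<alpha> * monomial \<alpha> x)"
    by metis
  have "(\<lambda>x. \<Sum>j<N. c j * \<phi> j x) = (\<lambda>x. \<Sum>j<N. \<Sum>\<alpha>\<in>{\<alpha>. sum \<alpha> UNIV \<le> n}. c j * C j \<alpha> * monomial \<alpha> x)"
    using C by (auto intro!: ext sum.cong simp: sum_distrib_left mult.assoc)
  also have "\<dots> = (\<lambda>x. \<Sum>\<alpha>\<in>{\<alpha>. sum \<alpha> UNIV \<le> n}. (\<Sum>j<N. c j * C j \<alpha>) * monomial \<alpha> x)"
    by (intro ext) (subst sum.swap, simp add: sum_distrib_right)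
  finally have "(\<lambda>x. \<Sum>j<N. c j * \<phi> j x) = (\<lambda>x. \<Sum>\<alpha>\<in>{\<alpha>. sum \<alpha> UNIV \<le> n}. (\<Sum>j<N. c j * C j \<alpha>) * monomial \<alpha> x)" .
  then show ?thesis unfolding polys_def by (intro CollectI exI[of _ "\<lambda>\<alpha>. \<Sum>j<N. c j * C j \<alpha>"])
qed

lemma space_mu:
  assumes "sets \<mu> = sets (restrict_space lborel \<Omega>)"
  shows "space \<mu> = \<Omega>"
  using sets_eq_imp_space_eq[OF assms] by (simp add: space_restrict_space)

lemma cont_meas:
  assumes "sets \<mu> = sets (restrict_space lborel \<Omega>)" "continuous_on \<Omega> h"
  shows "h \<in> borel_measurable \<mu>"
proof -
  have "sets (restrict_space lborel \<Omega>) = sets (restrict_space borel \<Omega>)"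
    by (rule sets_restrict_space_cong) simp
  then have "sets \<mu> = sets (restrict_space borel \<Omega>)" using assms(1) by simp
  then show ?thesis
    by (subst measurable_cong_sets[OF _ refl]) (assumption, rule borel_measurable_continuous_on_restrict[OF assms(2)])
qed

lemma cont_integrable:
  fixes h :: "'a::euclidean_space \<Rightarrow> real"
  assumes "sets \<mu> = sets (restrict_space lborel \<Omega>)" "continuous_on \<Omega> h"
    "compact \<Omega>" "finite_measure \<mu>"
  shows "integrable \<mu> h"
proof -
  have "bounded (h ` \<Omega>)" using compact_continuous_image[OF assms(2,3)] compact_imp_bounded by blast
  then obtain B where B: "\<forall>x\<in>\<Omega>. norm (h x) \<le> B" unfolding bounded_iff by auto
  have sp: "space \<mu> = \<Omega>" using sets_eq_imp_space_eq[OF assms(1)] by (simp add: space_restrict_space)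
  show ?thesis
  proof (rule finite_measure.integrable_const_bound[OF assms(4), of _ B])
    show "AE x in \<mu>. norm (h x) \<le> B"
      by (rule AE_I2) (use B sp in blast)
    show "h \<in> borel_measurable \<mu>" by (rule cont_meas[OF assms(1,2)])
  qed
qed



lemma cub_P2:
  "cub w xs M (\<lambda>x. (\<Sum>j<N. c j * \<phi> j x)\<^sup>2) = qf (gram w xs M \<phi>) N c"
proof -
  have "cub w xs M (\<lambda>x. (\<Sum>j<N. c j * \<phi> j x)\<^sup>2)
      = (\<Sum>k<M. \<Sum>i<N. \<Sum>j<N. c i * (w k * \<phi> i (xs k) * \<phi> j (xs k)) * c j)"
    unfolding cub_def power2_eq_square sum_product sum_distrib_left
    by (intro sum.cong refl) (simp add: algebra_simps sum_distrib_left)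
  also have "\<dots> = (\<Sum>i<N. \<Sum>k<M. \<Sum>j<N. c i * (w k * \<phi> i (xs k) * \<phi> j (xs k)) * c j)"
    by (rule sum.swap)
  also have "\<dots> = (\<Sum>i<N. \<Sum>j<N. \<Sum>k<M. c i * (w k * \<phi> i (xs k) * \<phi> j (xs k)) * c j)"
    by (intro sum.cong refl sum.swap)
  also have "\<dots> = qf (gram w xs M \<phi>) N c"
    unfolding qf_def gram_def cub_def sum_distrib_left sum_distrib_right
    by (intro sum.cong refl) (simp add: algebra_simps)
  finally show ?thesis .
qed

lemma gram_lin:
  "(\<Sum>j<N. gram w xs M \<phi> i j * a j) = cub w xs M (\<lambda>x. (\<Sum>j<N. a j * \<phi> j x) * \<phi> i x)"
proof -
  have "(\<Sum>j<N. gram w xs M \<phi> i j * a j) = (\<Sum>j<N. \<Sum>k<M. w k * \<phi> i (xs k) * \<phi> j (xs k) * a j)"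
    unfolding gram_def cub_def sum_distrib_right by (simp add: mult.assoc)
  also have "\<dots> = (\<Sum>k<M. \<Sum>j<N. w k * \<phi> i (xs k) * \<phi> j (xs k) * a j)" by (rule sum.swap)
  also have "\<dots> = cub w xs M (\<lambda>x. (\<Sum>j<N. a j * \<phi> j x) * \<phi> i x)"
    unfolding cub_def sum_distrib_left sum_distrib_right
    by (intro sum.cong refl) (simp add: algebra_simps)
  finally show ?thesis .
qed

lemma dot_cub:
  "(\<Sum>i<N. d i * cub w xs M (\<lambda>x. g x * \<phi> i x)) = cub w xs M (\<lambda>x. g x * (\<Sum>i<N. d i * \<phi> i x))"
proof -
  have "(\<Sum>i<N. d i * cub w xs M (\<lambda>x. g x * \<phi> i x)) = (\<Sum>i<N. \<Sum>k<M. d i * (w k * (g (xs k) * \<phi> i (xs k))))"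
    unfolding cub_def sum_distrib_left by simp
  also have "\<dots> = (\<Sum>k<M. \<Sum>i<N. d i * (w k * (g (xs k) * \<phi> i (xs k))))" by (rule sum.swap)
  also have "\<dots> = cub w xs M (\<lambda>x. g x * (\<Sum>i<N. d i * \<phi> i x))"
    unfolding cub_def sum_distrib_left
    by (intro sum.cong refl) (simp add: algebra_simps)
  finally show ?thesis .
qed

lemma qf_eig:
  assumes "\<forall>i<N. (\<Sum>j<N. H i j * u j) = ev * u i"
  shows "qf H N u = ev * nrm N u"
proof -
  have "qf H N u = (\<Sum>i<N. u i * (ev * u i))" unfolding qf_def using assms by (intro sum.cong) auto
  also have "\<dots> = ev * nrm N u" by (simp add: nrm_def sum_distrib_left power2_eq_square mult_ac)
  finally show ?thesis .
qed

lemma int_P: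
  assumes int: "\<forall>i<N. \<forall>j<N. integrable \<mu> (\<lambda>x. \<phi> i x * \<phi> j x)"
    and orth: "\<forall>i<N. \<forall>j<N. (\<integral>x. \<phi> i x * \<phi> j x \<partial>\<mu>) = (if i = j then 1 else 0)"
  shows "(\<integral>x. (\<Sum>j<N. c j * \<phi> j x)\<^sup>2 \<partial>\<mu>) = nrm N c"
proof -
  have "(\<integral>x. (\<Sum>j<N. c j * \<phi> j x)\<^sup>2 \<partial>\<mu>)
      = (\<integral>x. (\<Sum>i<N. \<Sum>j<N. (c i * c j) * (\<phi> i x * \<phi> j x)) \<partial>\<mu>)"
    unfolding power2_eq_square sum_product by (intro Bochner_Integration.integral_cong refl sum.cong) (simp add: algebra_simps)
  also have "\<dots> = (\<Sum>i<N. \<Sum>j<N. (c i * c j) * (\<integral>x. \<phi> i x * \<phi> j x \<partial>\<mu>))"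
  proof -
    have "(\<integral>x. (\<Sum>i<N. \<Sum>j<N. (c i * c j) * (\<phi> i x * \<phi> j x)) \<partial>\<mu>)
        = (\<Sum>i<N. \<integral>x. (\<Sum>j<N. (c i * c j) * (\<phi> i x * \<phi> j x)) \<partial>\<mu>)"
      using int by (intro Bochner_Integration.integral_sum Bochner_Integration.integrable_sum integrable_mult_right) auto
    also have "\<dots> = (\<Sum>i<N. \<Sum>j<N. \<integral>x. (c i * c j) * (\<phi> i x * \<phi> j x) \<partial>\<mu>)"
      using int by (intro sum.cong refl Bochner_Integration.integral_sum integrable_mult_right) auto
    also have "\<dots> = (\<Sum>i<N. \<Sum>j<N. (c i * c j) * (\<integral>x. \<phi> i x * \<phi> j x \<partial>\<mu>))"
      by simp
    finally show ?thesis .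
  qed
  also have "\<dots> = (\<Sum>i<N. \<Sum>j<N. (c i * c j) * (if i = j then 1 else 0))"
    using orth by (intro sum.cong refl) auto
  also have "\<dots> = nrm N c" unfolding nrm_def
    by (intro sum.cong refl) (simp add: if_distrib sum.delta sum.delta' power2_eq_square cong: if_cong)
  finally show ?thesis .
qed

lemma final_bound:
  fixes g q h :: "'a \<Rightarrow> real"
  assumes ig: "integrable \<mu> (\<lambda>x. (g x)\<^sup>2)" and iq: "integrable \<mu> (\<lambda>x. (q x)\<^sup>2)"
    and ih: "integrable \<mu> (\<lambda>x. (h x)\<^sup>2)"
    and hx: "\<forall>x\<in>space \<mu>. h x = g x - q x" and K: "K > 0"
    and bg: "(\<integral>x. (g x)\<^sup>2 \<partial>\<mu>) \<le> X" and bq: "(\<integral>x. (q x)\<^sup>2 \<partial>\<mu>) \<le> K * X"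
  shows "sqrt (\<integral>x. (h x)\<^sup>2 \<partial>\<mu>) \<le> (1 + sqrt K) * sqrt X"
proof -
  define t where "t = sqrt K"
  have t: "t > 0" unfolding t_def using K by simp
  have "0 \<le> (\<integral>x. (g x)\<^sup>2 \<partial>\<mu>)" by (rule Bochner_Integration.integral_nonneg) simp
  then have X: "X \<ge> 0" using bg by linarith
  have pw: "(a - b)\<^sup>2 \<le> (1 + t) * a\<^sup>2 + (1 + 1/t) * b\<^sup>2" for a b :: real
  proof -
    have "0 \<le> (t * a + b)\<^sup>2 / t" using t by simp
    also have "(t * a + b)\<^sup>2 / t = t * a\<^sup>2 + 2 * a * b + b\<^sup>2 / t"
      using t by (simp add: field_simps power2_eq_square)
    finally show ?thesis by (simp add: power2_eq_square algebra_simps add_divide_distrib)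
  qed
  have "(\<integral>x. (h x)\<^sup>2 \<partial>\<mu>) \<le> (\<integral>x. (1 + t) * (g x)\<^sup>2 + (1 + 1/t) * (q x)\<^sup>2 \<partial>\<mu>)"
    using ih ig iq hx pw by (intro integral_mono) auto
  also have "\<dots> = (1 + t) * (\<integral>x. (g x)\<^sup>2 \<partial>\<mu>) + (1 + 1/t) * (\<integral>x. (q x)\<^sup>2 \<partial>\<mu>)"
    using ig iq by simp
  also have "\<dots> \<le> (1 + t) * X + (1 + 1/t) * (K * X)"
    using bg bq t by (intro add_mono mult_left_mono) auto
  also have "\<dots> = (1 + t)\<^sup>2 * X"
    using t K unfolding t_def by (simp add: field_simps power2_eq_square)
  finally have "sqrt (\<integral>x. (h x)\<^sup>2 \<partial>\<mu>) \<le> sqrt ((1 + t)\<^sup>2 * X)" by simp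
  also have "\<dots> = (1 + t) * sqrt X" using t by (simp add: real_sqrt_mult)
  finally show ?thesis unfolding t_def .
qed



lemma mat_mult_vec_idx:
  assumes "i < N"
  shows "vec_index (mat N N (\<lambda>(i,j). G i j) *\<^sub>v vec N v) i = (\<Sum>j<N. G i j * v j)"
  using assms by (simp add: scalar_prod_def row_def atLeast0LessThan)

lemma finite_eigs: fixes G :: "nat \<Rightarrow> nat \<Rightarrow> real" shows "finite {ev. is_eigenvalue G N ev}"
proof -
  define GM where "GM = mat N N (\<lambda>(i,j). G i j)"
  have GMc: "GM \<in> carrier_mat N N" unfolding GM_def by simp
  have "{ev. is_eigenvalue G N ev} \<subseteq> spectrum GM"
  proof
    fix ev assume "ev \<in> {ev. is_eigenvalue G N ev}"
    then obtain v where nz: "\<exists>i<N. v i \<noteq> 0" and ev: "\<forall>i<N. (\<Sum>j<N. G i j * v j) = ev * v i"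
      unfolding is_eigenvalue_def by auto
    have "eigenvector GM (vec N v) ev"
      unfolding eigenvector_def
    proof (intro conjI)
      show "vec N v \<in> carrier_vec (dim_row GM)" using GMc by simp
      show "vec N v \<noteq> 0\<^sub>v (dim_row GM)"
      proof
        assume "vec N v = 0\<^sub>v (dim_row GM)"
        then have "\<forall>i<N. vec_index (vec N v) i = vec_index (0\<^sub>v N) i" using GMc by simp
        then show False using nz by auto
      qed
      show "GM *\<^sub>v vec N v = ev \<cdot>\<^sub>v vec N v"
      proof (rule eq_vecI)
        fix i assume "i < dim_vec (ev \<cdot>\<^sub>v vec N v)"
        then have i: "i < N" by simp
        have "vec_index (GM *\<^sub>v vec N v) i = (\<Sum>j<N. G i j * v j)"
          unfolding GM_def by (rule mat_mult_vec_idx[OF i])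
        then show "vec_index (GM *\<^sub>v vec N v) i = vec_index (ev \<cdot>\<^sub>v vec N v) i"
          using ev i by simp
      qed (use GMc in simp)
    qed
    then show "ev \<in> spectrum GM" unfolding spectrum_def eigenvalue_def by auto
  qed
  then show ?thesis using card_finite_spectrum(1)[OF GMc] finite_subset by blast
qed

lemma solve_unique:
  fixes G :: "nat \<Rightarrow> nat \<Rightarrow> real"
  assumes inj: "\<forall>c. (\<forall>i<N. (\<Sum>j<N. G i j * c j) = 0) \<longrightarrow> (\<forall>i<N. c i = 0)"
  shows "\<exists>!c. (\<forall>i<N. (\<Sum>j<N. G i j * c j) = b i) \<and> (\<forall>j\<ge>N. c j = 0)"
proof -
  define GM where "GM = mat N N (\<lambda>(i,j). G i j)"
  have GMc: "GM \<in> carrier_mat N N" unfolding GM_def by simp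
  have "Determinant.det GM \<noteq> 0"
  proof
    assume "Determinant.det GM = 0"
    then obtain v where v: "v \<in> carrier_vec N" "v \<noteq> 0\<^sub>v N" "GM *\<^sub>v v = 0\<^sub>v N"
      using det_0_iff_vec_prod_zero_field[OF GMc] by auto
    define c where "c = (\<lambda>j. vec_index v j)"
    have vv: "v = vec N c" using v(1) unfolding c_def by auto
    have "\<forall>i<N. (\<Sum>j<N. G i j * c j) = 0"
    proof (intro allI impI)
      fix i assume i: "i < N"
      have "vec_index (GM *\<^sub>v v) i = 0" using v(3) i by simp
      then show "(\<Sum>j<N. G i j * c j) = 0" using i unfolding vv GM_def mat_mult_vec_idx[OF i] by simp
    qed
    then have "\<forall>i<N. c i = 0" using inj by blast
    then have "v = 0\<^sub>v N" unfolding vv by auto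
    then show False using v(2) by simp
  qed
  then have "GM \<in> Units (ring_mat TYPE(real) N ())" by (rule det_non_zero_imp_unit[OF GMc])
  then obtain B where B: "B \<in> carrier_mat N N" "GM * B = 1\<^sub>m N"
    unfolding Units_def by (auto simp: ring_mat_def)
  define x where "x = B *\<^sub>v vec N b"
  have "GM *\<^sub>v x = vec N b"
    unfolding x_def using B GMc by (simp add: assoc_mult_mat_vec[symmetric, of _ N N _ N])
  define c where "c = (\<lambda>j. if j < N then vec_index x j else 0)"
  have xc: "x = vec N c" unfolding c_def x_def using B by auto
  have sol: "\<forall>i<N. (\<Sum>j<N. G i j * c j) = b i"
  proof (intro allI impI)
    fix i assume i: "i < N"
    have "vec_index (GM *\<^sub>v x) i = b i" using \<open>GM *\<^sub>v x = vec N b\<close> i by simp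
    then show "(\<Sum>j<N. G i j * c j) = b i" unfolding xc GM_def mat_mult_vec_idx[OF i] by simp
  qed
  have z: "\<forall>j\<ge>N. c j = 0" unfolding c_def by auto
  show ?thesis
  proof (rule ex1I[of _ c])
    show "(\<forall>i<N. (\<Sum>j<N. G i j * c j) = b i) \<and> (\<forall>j\<ge>N. c j = 0)" using sol z by blast
  next
    fix d assume d: "(\<forall>i<N. (\<Sum>j<N. G i j * d j) = b i) \<and> (\<forall>j\<ge>N. d j = 0)"
    have "\<forall>i<N. (\<Sum>j<N. G i j * (d j - c j)) = 0"
      using d sol by (simp add: algebra_simps sum_subtractf)
    then have "\<forall>i<N. d i - c i = 0" using inj[rule_format, of "\<lambda>j. d j - c j"] by blast
    then show "d = c" using d z by (intro ext) (metis eq_iff_diff_eq_0 not_le)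
  qed
qed



theorem proposition1:
  fixes \<Omega> :: "(real^'d) set" and \<mu> :: "(real^'d) measure" and n :: nat
    and M :: nat and xs :: "nat \<Rightarrow> real^'d" and w :: "nat \<Rightarrow> real"
    and N :: nat and \<phi> :: "nat \<Rightarrow> real^'d \<Rightarrow> real"
    and A B :: real and f :: "real^'d \<Rightarrow> real"
  assumes "compact \<Omega>"
    and "sets \<mu> = sets (restrict_space lborel \<Omega>)"
    and "finite_measure \<mu>"
    and "measure \<mu> \<Omega> > 0"
    and nodes: "\<forall>i<M. xs i \<in> \<Omega>"
    and weights: "\<forall>i<M. w i > 0"
    and basis_poly: "\<forall>j<N. \<phi> j \<in> polys n"
    and orthonormal: "\<forall>i<N. \<forall>j<N. (\<integral>x. \<phi> i x * \<phi> j x \<partial>\<mu>) = (if i = j then 1 else 0)"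
    and spanning: "\<forall>p\<in>polys n. \<exists>c. \<forall>x\<in>\<Omega>. p x = (\<Sum>j<N. c j * \<phi> j x)"
    and "A > 0" and "B > 0"
    and MZ: "\<forall>p\<in>polys n. A * (L2norm \<mu> p)\<^sup>2 \<le> cub w xs M (\<lambda>x. (p x)\<^sup>2)
                          \<and> cub w xs M (\<lambda>x. (p x)\<^sup>2) \<le> B * (L2norm \<mu> p)\<^sup>2"
    and "max \<bar>A - 1\<bar> \<bar>B - 1\<bar> < 1"
    and "continuous_on \<Omega> f"
  shows "L2norm \<mu> (\<lambda>x. f x - lsq_approx w xs M \<phi> N f x)
           \<le> (1 + sqrt (cond2 (gram w xs M \<phi>) N)) * sqrt (measure \<mu> \<Omega>) * best_approx_err n \<Omega> f
       \<and> (1 + sqrt (cond2 (gram w xs M \<phi>) N)) * sqrt (measure \<mu> \<Omega>) * best_approx_err n \<Omega> f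
           \<le> (1 + sqrt ((1 + max \<bar>A - 1\<bar> \<bar>B - 1\<bar>) / (1 - max \<bar>A - 1\<bar> \<bar>B - 1\<bar>)))
              * sqrt (measure \<mu> \<Omega>) * best_approx_err n \<Omega> f
       \<and> ((\<Sum>i<M. w i) = measure \<mu> \<Omega> \<longrightarrow>
            L2norm \<mu> (\<lambda>x. f x - lsq_approx w xs M \<phi> N f x)
              \<le> (1 + 1 / sqrt A) * sqrt (measure \<mu> \<Omega>) * best_approx_err n \<Omega> f
          \<and> (1 + 1 / sqrt A) * sqrt (measure \<mu> \<Omega>) * best_approx_err n \<Omega> f
              \<le> (1 + 1 / sqrt (1 - max \<bar>A - 1\<bar> \<bar>B - 1\<bar>)) * sqrt (measure \<mu> \<Omega>) * best_approx_err n \<Omega> f)"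

proof -
  define S where "S = cub w xs M"
  define Gm where "Gm = gram w xs M \<phi>"
  define E where "E = {ev. is_eigenvalue Gm N ev}"
  define P where "P = (\<lambda>(c::nat\<Rightarrow>real) x. \<Sum>j<N. c j * \<phi> j x)"
  have sets: "sets \<mu> = sets (restrict_space lborel \<Omega>)" by fact
  have cpt: "compact \<Omega>" by fact
  have fm: "finite_measure \<mu>" by fact
  have Apos: "A > 0" by fact
  have eta1: "max \<bar>A - 1\<bar> \<bar>B - 1\<bar> < 1" by fact
  have fc: "continuous_on \<Omega> f" by fact
  have sp: "space \<mu> = \<Omega>" using space_mu[OF sets] .
  have \<Omega>ne: "\<Omega> \<noteq> {}"
  proof
    assume "\<Omega> = {}"
    then have "measure \<mu> \<Omega> = 0" by simp
    then show False using \<open>measure \<mu> \<Omega> > 0\<close> by simp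
  qed
  have polyc: "continuous_on \<Omega> p" if "p \<in> polys n" for p
    by (rule continuous_on_subset[OF polys_cont[OF that]]) simp
  have intc: "integrable \<mu> h" if "continuous_on \<Omega> h" for h :: "real^'d \<Rightarrow> real"
    using cont_integrable[OF sets that cpt fm] .
  have \<phi>c: "\<forall>j<N. continuous_on \<Omega> (\<phi> j)" using basis_poly polyc by blast
  have Pp: "P c \<in> polys n" for c unfolding P_def using lincomb_polys[OF basis_poly] by simp
  have Pc: "continuous_on \<Omega> (P c)" for c using Pp polyc by blast
  have int\<phi>: "\<forall>i<N. \<forall>j<N. integrable \<mu> (\<lambda>x. \<phi> i x * \<phi> j x)"
  proof (intro allI impI)
    fix i j assume "i < N" "j < N"
    then show "integrable \<mu> (\<lambda>x. \<phi> i x * \<phi> j x)" using \<phi>c by (intro intc continuous_on_mult) auto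
  qed
  have intP: "(\<integral>x. (P c x)\<^sup>2 \<partial>\<mu>) = nrm N c" for c
    unfolding P_def using int_P[OF int\<phi> orthonormal] by simp
  have cubP: "S (\<lambda>x. (P c x)\<^sup>2) = qf Gm N c" for c
    unfolding S_def Gm_def P_def by (simp add: cub_P2)
  have L2P: "(L2norm \<mu> (P c))\<^sup>2 = nrm N c" for c
    unfolding L2norm_def using intP[of c] nrm_nonneg[of N c] by simp
  have PD: "A * nrm N c \<le> qf Gm N c \<and> qf Gm N c \<le> B * nrm N c" for c
    using MZ[rule_format, OF Pp[of c]] L2P[of c] cubP[of c] unfolding S_def by simp
  have sym: "\<forall>i<N. \<forall>j<N. Gm i j = Gm j i" unfolding Gm_def gram_def by (simp add: mult.commute)
  obtain a1 where a1: "\<forall>x\<in>\<Omega>. 1 = (\<Sum>j<N. a1 j * \<phi> j x)"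
    using spanning[rule_format, OF one_polys[of n]] by auto
  have Npos: "N > 0"
  proof (rule ccontr)
    assume "\<not> N > 0"
    then have "N = 0" by simp
    moreover obtain x0 where "x0 \<in> \<Omega>" using \<Omega>ne by blast
    ultimately show False using a1 by auto
  qed
  obtain m v where v: "\<exists>i<N. v i \<noteq> 0" "\<forall>i<N. (\<Sum>j<N. Gm i j * v j) = m * v i"
    and mb: "\<forall>c. qf Gm N c \<ge> m * nrm N c"
    using sym_min_eig[OF sym Npos] by blast
  define Hn where "Hn = (\<lambda>i j. - Gm i j)"
  have symn: "\<forall>i<N. \<forall>j<N. Hn i j = Hn j i" unfolding Hn_def using sym by simp
  from sym_min_eig[OF symn Npos] obtain m' v' where v'1: "\<exists>i<N. v' i \<noteq> 0"
    and v'2: "\<forall>i<N. (\<Sum>j<N. Hn i j * v' j) = m' * v' i"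
    and mb': "\<forall>c. qf Hn N c \<ge> m' * nrm N c"
    by blast
  define lmax where "lmax = - m'"
  have qfneg: "qf Hn N c = - qf Gm N c" for c
    unfolding qf_def Hn_def by (simp add: sum_negf)
  have Mb: "qf Gm N c \<le> lmax * nrm N c" for c
    using mb'[rule_format, of c] qfneg[of c] unfolding lmax_def by simp
  have mE: "m \<in> E" unfolding E_def is_eigenvalue_def using v by blast
  have "\<forall>i<N. (\<Sum>j<N. Gm i j * v' j) = lmax * v' i"
  proof (intro allI impI)
    fix i assume i: "i < N"
    have "(\<Sum>j<N. Hn i j * v' j) = - (\<Sum>j<N. Gm i j * v' j)" unfolding Hn_def by (simp add: sum_negf)
    then show "(\<Sum>j<N. Gm i j * v' j) = lmax * v' i" using v'2 i unfolding lmax_def by simp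
  qed
  then have lE: "lmax \<in> E" unfolding E_def is_eigenvalue_def using v'1 by blast
  have Eprop: "m \<le> ev \<and> ev \<le> lmax \<and> A \<le> ev \<and> ev \<le> B" if evE: "ev \<in> E" for ev
  proof -
    obtain u where u: "\<exists>i<N. u i \<noteq> 0" "\<forall>i<N. (\<Sum>j<N. Gm i j * u j) = ev * u i"
      using evE unfolding E_def is_eigenvalue_def by blast
    have q: "qf Gm N u = ev * nrm N u" using qf_eig[OF u(2)] .
    have np: "nrm N u > 0"
    proof -
      have "nrm N u \<noteq> 0" using u(1) nrm_zero by blast
      then show ?thesis using nrm_nonneg[of N u] by linarith
    qed
    have "m * nrm N u \<le> ev * nrm N u" using mb q by metis
    moreover have "ev * nrm N u \<le> lmax * nrm N u" using Mb[of u] q by simp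
    moreover have "A * nrm N u \<le> ev * nrm N u" using PD[of u] q by simp
    moreover have "ev * nrm N u \<le> B * nrm N u" using PD[of u] q by simp
    ultimately show ?thesis using np by (auto simp: mult_le_cancel_right)
  qed
  have finE: "finite E" unfolding E_def by (rule finite_eigs)
  have MinE: "Min E = m" by (rule Min_eqI[OF finE]) (use Eprop mE in auto)
  have MaxE: "Max E = lmax" by (rule Max_eqI[OF finE]) (use Eprop lE in auto)
  have cond: "cond2 (gram w xs M \<phi>) N = lmax / m"
    unfolding cond2_def Gm_def[symmetric] E_def[symmetric] MinE MaxE ..
  have mA: "A \<le> m" "m \<le> lmax" "lmax \<le> B" using Eprop[OF mE] Eprop[OF lE] by auto
  have mpos: "m > 0" using mA Apos by linarith
  have inj: "\<forall>c. (\<forall>i<N. (\<Sum>j<N. Gm i j * c j) = 0) \<longrightarrow> (\<forall>i<N. c i = 0)"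
  proof (intro allI impI)
    fix c i assume h: "\<forall>i<N. (\<Sum>j<N. Gm i j * c j) = 0" and i: "i < N"
    have "qf Gm N c = 0" unfolding qf_def using h by simp
    then have "A * nrm N c \<le> 0" using PD[of c] by simp
    then have "nrm N c = 0" using Apos nrm_nonneg[of N c] by (simp add: mult_le_0_iff)
    then show "c i = 0" using nrm_zero i by blast
  qed
  define c where "c = lsq_coeffs w xs M \<phi> N f"
  have ex1: "\<exists>!c. (\<forall>i<N. (\<Sum>j<N. gram w xs M \<phi> i j * c j) = cub w xs M (\<lambda>x. f x * \<phi> i x)) \<and> (\<forall>j\<ge>N. c j = 0)"
    using solve_unique[OF inj[unfolded Gm_def], of "\<lambda>i. cub w xs M (\<lambda>x. f x * \<phi> i x)"] by simp
  have csol: "\<forall>i<N. (\<Sum>j<N. Gm i j * c j) = S (\<lambda>x. f x * \<phi> i x)"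
    using theI'[OF ex1] unfolding c_def lsq_coeffs_def Gm_def S_def by blast
  have lsq: "lsq_approx w xs M \<phi> N f = P c" unfolding lsq_approx_def P_def c_def ..
  define S1 where "S1 = (\<Sum>i<M. w i)"
  have S1eq: "S1 = qf Gm N a1"
  proof -
    have "S (\<lambda>x. (P a1 x)\<^sup>2) = S1" unfolding S_def cub_def S1_def
      using nodes a1 by (intro sum.cong refl) (auto simp: P_def)
    then show ?thesis using cubP by simp
  qed
  have nrm_a1: "nrm N a1 = measure \<mu> \<Omega>"
  proof -
    have "(\<integral>x. (P a1 x)\<^sup>2 \<partial>\<mu>) = (\<integral>x. 1 \<partial>\<mu>)"
      using a1 sp by (intro Bochner_Integration.integral_cong refl) (auto simp: P_def)
    also have "\<dots> = measure \<mu> \<Omega>" using sp by simp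
    finally show ?thesis using intP by simp
  qed
  have S1le: "S1 \<le> lmax * measure \<mu> \<Omega>" using Mb[of a1] S1eq nrm_a1 by simp
  define s where "s = (\<lambda>p. SUP x\<in>\<Omega>. \<bar>f x - p x\<bar>)"
  have perp: "(\<forall>x\<in>\<Omega>. \<bar>f x - p x\<bar> \<le> s p) \<and> 0 \<le> s p \<and>
      (\<exists>d. (\<forall>x\<in>\<Omega>. f x - P c x = (f x - p x) - P d x) \<and> qf Gm N d \<le> S1 * (s p)\<^sup>2)"
    if pP: "p \<in> polys n" for p
  proof -
    have gc: "continuous_on \<Omega> (\<lambda>x. \<bar>f x - p x\<bar>)"
      using fc polyc[OF pP] by (intro continuous_intros)
    have "bounded ((\<lambda>x. \<bar>f x - p x\<bar>) ` \<Omega>)"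
      using compact_continuous_image[OF gc cpt] compact_imp_bounded by blast
    then have bdd: "bdd_above ((\<lambda>x. \<bar>f x - p x\<bar>) ` \<Omega>)" by (rule bounded_imp_bdd_above)
    have sb: "\<forall>x\<in>\<Omega>. \<bar>f x - p x\<bar> \<le> s p"
    proof
      fix x assume x: "x \<in> \<Omega>"
      have "(\<lambda>x. \<bar>f x - p x\<bar>) x \<le> (SUP x\<in>\<Omega>. \<bar>f x - p x\<bar>)" by (rule cSUP_upper[OF x bdd])
      then show "\<bar>f x - p x\<bar> \<le> s p" unfolding s_def by simp
    qed
    have s0: "0 \<le> s p"
    proof -
      obtain x0 where x0: "x0 \<in> \<Omega>" using \<Omega>ne by blast
      have "0 \<le> \<bar>f x0 - p x0\<bar>" by simp
      also have "\<dots> \<le> s p" using sb x0 by blast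
      finally show ?thesis .
    qed
    obtain a where a: "\<forall>x\<in>\<Omega>. p x = (\<Sum>j<N. a j * \<phi> j x)" using spanning pP by blast
    define d where "d = (\<lambda>j. c j - a j)"
    have Ga: "(\<Sum>j<N. Gm i j * a j) = S (\<lambda>x. p x * \<phi> i x)" for i
    proof -
      have "(\<Sum>j<N. Gm i j * a j) = cub w xs M (\<lambda>x. (\<Sum>j<N. a j * \<phi> j x) * \<phi> i x)"
        unfolding Gm_def by (rule gram_lin)
      also have "\<dots> = S (\<lambda>x. p x * \<phi> i x)" unfolding S_def cub_def
        using a nodes by (intro sum.cong refl) auto
      finally show ?thesis .
    qed
    have Gd: "\<forall>i<N. (\<Sum>j<N. Gm i j * d j) = S (\<lambda>x. (f x - p x) * \<phi> i x)"
    proof (intro allI impI)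
      fix i assume i: "i < N"
      have "(\<Sum>j<N. Gm i j * d j) = (\<Sum>j<N. Gm i j * c j) - (\<Sum>j<N. Gm i j * a j)"
        unfolding d_def by (simp add: algebra_simps sum_subtractf)
      also have "\<dots> = S (\<lambda>x. f x * \<phi> i x) - S (\<lambda>x. p x * \<phi> i x)" using csol i Ga by simp
      also have "\<dots> = S (\<lambda>x. (f x - p x) * \<phi> i x)" unfolding S_def cub_def
        by (simp add: sum_subtractf[symmetric] algebra_simps)
      finally show "(\<Sum>j<N. Gm i j * d j) = S (\<lambda>x. (f x - p x) * \<phi> i x)" .
    qed
    have qd1: "qf Gm N d = S (\<lambda>x. (f x - p x) * P d x)"
    proof -
      have "qf Gm N d = (\<Sum>i<N. d i * S (\<lambda>x. (f x - p x) * \<phi> i x))"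
        unfolding qf_def using Gd by (intro sum.cong refl) auto
      also have "\<dots> = S (\<lambda>x. (f x - p x) * P d x)" unfolding S_def P_def by (rule dot_cub)
      finally show ?thesis .
    qed
    have qd2: "qf Gm N d = S (\<lambda>x. (P d x)\<^sup>2)" using cubP by simp
    have "S (\<lambda>x. (f x - p x) * P d x) \<le> (S (\<lambda>x. (f x - p x)\<^sup>2) + S (\<lambda>x. (P d x)\<^sup>2)) / 2"
    proof -
      have "S (\<lambda>x. (f x - p x) * P d x) \<le> (\<Sum>k<M. w k * (((f (xs k) - p (xs k))\<^sup>2 + (P d (xs k))\<^sup>2) / 2))"
        unfolding S_def cub_def
      proof (intro sum_mono mult_left_mono)
        fix k assume k: "k \<in> {..<M}"
        show "0 \<le> w k" using weights k by (simp add: less_imp_le)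
        have "0 \<le> ((f (xs k) - p (xs k)) - P d (xs k))\<^sup>2" by simp
        then show "(f (xs k) - p (xs k)) * P d (xs k) \<le> ((f (xs k) - p (xs k))\<^sup>2 + (P d (xs k))\<^sup>2) / 2"
          by (simp add: power2_eq_square algebra_simps)
      qed
      also have "\<dots> = (S (\<lambda>x. (f x - p x)\<^sup>2) + S (\<lambda>x. (P d x)\<^sup>2)) / 2"
      proof -
        have "(\<Sum>k<M. w k * (((f (xs k) - p (xs k))\<^sup>2 + (P d (xs k))\<^sup>2) / 2))
            = (\<Sum>k<M. w k * (f (xs k) - p (xs k))\<^sup>2 / 2 + w k * (P d (xs k))\<^sup>2 / 2)"
          by (rule sum.cong) (simp_all add: ring_distribs add_divide_distrib)
        also have "\<dots> = (\<Sum>k<M. w k * (f (xs k) - p (xs k))\<^sup>2) / 2 + (\<Sum>k<M. w k * (P d (xs k))\<^sup>2) / 2"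
          by (simp only: sum.distrib sum_divide_distrib)
        also have "\<dots> = (S (\<lambda>x. (f x - p x)\<^sup>2) + S (\<lambda>x. (P d x)\<^sup>2)) / 2"
          unfolding S_def cub_def by (simp only: add_divide_distrib)
        finally show ?thesis .
      qed
      finally show ?thesis .
    qed
    then have "qf Gm N d \<le> (S (\<lambda>x. (f x - p x)\<^sup>2) + qf Gm N d) / 2"
      by (simp only: qd1[symmetric] qd2[symmetric])
    moreover have "\<And>a X::real. a \<le> (X + a) / 2 \<Longrightarrow> a \<le> X" by (simp add: field_simps)
    ultimately have qd3: "qf Gm N d \<le> S (\<lambda>x. (f x - p x)\<^sup>2)" by blast
    have "S (\<lambda>x. (f x - p x)\<^sup>2) \<le> (\<Sum>k<M. w k * (s p)\<^sup>2)"
      unfolding S_def cub_def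
    proof (intro sum_mono mult_left_mono)
      fix k assume k: "k \<in> {..<M}"
      show "0 \<le> w k" using weights k by (simp add: less_imp_le)
      have "\<bar>f (xs k) - p (xs k)\<bar> \<le> s p" using sb nodes k by auto
      then have "\<bar>f (xs k) - p (xs k)\<bar>\<^sup>2 \<le> (s p)\<^sup>2" by (intro power_mono) auto
      then show "(f (xs k) - p (xs k))\<^sup>2 \<le> (s p)\<^sup>2" by simp
    qed
    also have "\<dots> = S1 * (s p)\<^sup>2" unfolding S1_def by (simp add: sum_distrib_right)
    finally have qd4: "qf Gm N d \<le> S1 * (s p)\<^sup>2" using qd3 by linarith
    have eq: "\<forall>x\<in>\<Omega>. f x - P c x = (f x - p x) - P d x"
      using a unfolding P_def d_def by (simp add: algebra_simps sum_subtractf)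
    show ?thesis using sb s0 eq qd4 by blast
  qed
  define bestE where "bestE = best_approx_err n \<Omega> f"
  have bestE_def': "bestE = (INF p\<in>polys n. s p)" unfolding bestE_def best_approx_err_def s_def ..
  have pne: "(polys n :: (real^'d \<Rightarrow> real) set) \<noteq> {}" using one_polys by blast
  have bestE0: "0 \<le> bestE" unfolding bestE_def'
  proof (rule cINF_greatest[OF pne])
    fix p :: "real^'d \<Rightarrow> real" assume "p \<in> polys n"
    from perp[OF this] show "0 \<le> s p" by (elim conjE)
  qed
  define L where "L = L2norm \<mu> (\<lambda>x. f x - lsq_approx w xs M \<phi> N f x)"
  have gen: "L \<le> (1 + sqrt Kc) * sqrt (measure \<mu> \<Omega>) * bestE"
    if Kc: "Kc > 0" and hyp: "\<And>d t. qf Gm N d \<le> S1 * t\<^sup>2 \<Longrightarrow> nrm N d \<le> Kc * (measure \<mu> \<Omega> * t\<^sup>2)" for Kc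
  proof -
    define C where "C = (1 + sqrt Kc) * sqrt (measure \<mu> \<Omega>)"
    have Cpos: "C > 0" unfolding C_def using Kc \<open>measure \<mu> \<Omega> > 0\<close> by (simp add: add_pos_nonneg)
    have "L / C \<le> s p" if pP: "p \<in> polys n" for p
    proof -
      obtain d where d: "\<forall>x\<in>\<Omega>. f x - P c x = (f x - p x) - P d x" "qf Gm N d \<le> S1 * (s p)\<^sup>2"
        using perp[OF pP] by blast
      have sb: "\<forall>x\<in>\<Omega>. \<bar>f x - p x\<bar> \<le> s p" and s0: "0 \<le> s p" using perp[OF pP] by auto
      have pc: "continuous_on \<Omega> p" using polyc[OF pP] .
      have ig: "integrable \<mu> (\<lambda>x. (f x - p x)\<^sup>2)" using fc pc by (intro intc continuous_intros)
      have iq: "integrable \<mu> (\<lambda>x. (P d x)\<^sup>2)" using Pc[of d] by (intro intc continuous_intros)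
      have ih: "integrable \<mu> (\<lambda>x. (f x - P c x)\<^sup>2)" using fc Pc[of c] by (intro intc continuous_intros)
      have bg: "(\<integral>x. (f x - p x)\<^sup>2 \<partial>\<mu>) \<le> measure \<mu> \<Omega> * (s p)\<^sup>2"
      proof -
        have "(\<integral>x. (f x - p x)\<^sup>2 \<partial>\<mu>) \<le> (\<integral>x. (s p)\<^sup>2 \<partial>\<mu>)"
        proof (rule integral_mono[OF ig])
          show "integrable \<mu> (\<lambda>x. (s p)\<^sup>2)" using fm by (simp add: finite_measure.integrable_const)
          fix x assume "x \<in> space \<mu>"
          then have "\<bar>f x - p x\<bar> \<le> s p" using sb sp by auto
          then have "\<bar>f x - p x\<bar>\<^sup>2 \<le> (s p)\<^sup>2" by (intro power_mono) auto
          then show "(f x - p x)\<^sup>2 \<le> (s p)\<^sup>2" by simp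
        qed
        also have "\<dots> = measure \<mu> \<Omega> * (s p)\<^sup>2" using sp by simp
        finally show ?thesis .
      qed
      have bq: "(\<integral>x. (P d x)\<^sup>2 \<partial>\<mu>) \<le> Kc * (measure \<mu> \<Omega> * (s p)\<^sup>2)"
        using intP[of d] hyp[OF d(2)] by simp
      have hx: "\<forall>x\<in>space \<mu>. f x - P c x = (f x - p x) - P d x" using d(1) sp by simp
      have "sqrt (\<integral>x. (f x - P c x)\<^sup>2 \<partial>\<mu>) \<le> (1 + sqrt Kc) * sqrt (measure \<mu> \<Omega> * (s p)\<^sup>2)"
        by (rule final_bound[OF ig iq ih hx Kc bg bq])
      also have "\<dots> = C * s p" unfolding C_def using s0 by (simp add: real_sqrt_mult)
      finally have "L \<le> C * s p" unfolding L_def L2norm_def lsq .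
      then show ?thesis using Cpos by (simp add: pos_divide_le_eq mult.commute)
    qed
    then have "L / C \<le> bestE" unfolding bestE_def' by (intro cINF_greatest[OF pne])
    then show ?thesis using Cpos unfolding C_def by (simp add: pos_divide_le_eq mult.commute)
  qed
  define \<eta> where "\<eta> = max \<bar>A - 1\<bar> \<bar>B - 1\<bar>"
  have \<eta>1: "\<eta> < 1" using eta1 unfolding \<eta>_def .
  have Bl: "B \<le> 1 + \<eta>" unfolding \<eta>_def by linarith
  have Al: "1 - \<eta> \<le> A" unfolding \<eta>_def by linarith
  have Kpos: "lmax / m > 0" using mA mpos by simp
  have part1: "L \<le> (1 + sqrt (lmax / m)) * sqrt (measure \<mu> \<Omega>) * bestE"
  proof (rule gen[OF Kpos])
    fix d t assume h: "qf Gm N d \<le> S1 * t\<^sup>2"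
    have "m * nrm N d \<le> lmax * (measure \<mu> \<Omega> * t\<^sup>2)"
    proof -
      have "m * nrm N d \<le> qf Gm N d" using mb by blast
      also have "\<dots> \<le> S1 * t\<^sup>2" by (rule h)
      finally have "m * nrm N d \<le> S1 * t\<^sup>2" .
      also have "\<dots> \<le> lmax * measure \<mu> \<Omega> * t\<^sup>2" using S1le by (intro mult_right_mono) auto
      finally show ?thesis by (simp add: mult.assoc)
    qed
    then show "nrm N d \<le> lmax / m * (measure \<mu> \<Omega> * t\<^sup>2)" using mpos
      by (simp add: pos_le_divide_eq mult.commute)
  qed
  have Kle: "lmax / m \<le> (1 + \<eta>) / (1 - \<eta>)"
    by (rule frac_le) (use mA Bl Al \<eta>1 Apos in linarith)+
  have part2: "(1 + sqrt (lmax / m)) * sqrt (measure \<mu> \<Omega>) * bestE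
      \<le> (1 + sqrt ((1 + \<eta>) / (1 - \<eta>))) * sqrt (measure \<mu> \<Omega>) * bestE"
    using Kle bestE0 by (intro mult_right_mono) auto
  have part3: "L \<le> (1 + 1 / sqrt A) * sqrt (measure \<mu> \<Omega>) * bestE" if ex: "(\<Sum>i<M. w i) = measure \<mu> \<Omega>"
  proof -
    have "L \<le> (1 + sqrt (1 / A)) * sqrt (measure \<mu> \<Omega>) * bestE"
    proof (rule gen)
      show "1 / A > 0" using Apos by simp
      fix d t assume h: "qf Gm N d \<le> S1 * t\<^sup>2"
      have "qf Gm N d \<le> measure \<mu> \<Omega> * t\<^sup>2" using h ex unfolding S1_def by simp
      then have "A * nrm N d \<le> measure \<mu> \<Omega> * t\<^sup>2" using PD[of d] by (meson order_trans)
      then show "nrm N d \<le> 1 / A * (measure \<mu> \<Omega> * t\<^sup>2)" using Apos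
        by (simp add: pos_le_divide_eq mult.commute)
    qed
    then show ?thesis by (simp add: real_sqrt_divide)
  qed
  have part4: "(1 + 1 / sqrt A) * sqrt (measure \<mu> \<Omega>) * bestE
      \<le> (1 + 1 / sqrt (1 - \<eta>)) * sqrt (measure \<mu> \<Omega>) * bestE"
  proof -
    have "1 / sqrt A \<le> 1 / sqrt (1 - \<eta>)" using Al \<eta>1 by (intro divide_left_mono) auto
    then show ?thesis using bestE0 by (intro mult_right_mono) auto
  qed
  show ?thesis
    using part1 part2 part3 part4
    unfolding L_def bestE_def \<eta>_def cond by blast
qed

end
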